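(* Let $n\ge 2$, $\sigma=(1,2,\dots,n-1)\in S_n$, and $\rho\in S_n$ defined by $\rho(n-1)=n$, $\rho(n)=n-1$, $\rho(k)=n-1-k$ for $1\le k\le n-2$. Suppose $\tau\in S_n$ has order $2$, $\tau(n)=n-1$, and $\tau\sigma^k\tau=\sigma^{\tau(k)}\tau\sigma^{\tau\rho\tau(k)}$ for all $k\in\{1,\dots,n-2\}$. Then for every $a\in\{1,\dots,n-1\}$ with $\gcd(a,n-1)=1$, the permutation $m_a\tau m_a^{-1}$ also has order $2$, sends $n$ to $n-1$, and satisfies $(m_a\tau m_a^{-1})\sigma^k(m_a\tau m_a^{-1})=\sigma^{\tau'(k)}\tau'\sigma^{\tau'\rho\tau'(k)}$ for all $k\in\{1,\dots,n-2\}$, where $\tau'=m_a\tau m_a^{-1}$.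
   Context: $S_n$ is the symmetric group on $\{1,\dots,n\}$ with product given by composition (rightmost applied first). Identify $\{1,\dots,n-1\}$ with $\mathbb{Z}/(n-1)\mathbb{Z}$ via $k\mapsto k \bmod (n-1)$ (so $n-1$ corresponds to $0$), and hence $\{1,\dots,n\}$ with $\mathbb{Z}/(n-1)\mathbb{Z}\cup\{n\}$. For $a$ coprime to $n-1$, $m_a\in S_n$ is multiplication by $a$ on $\mathbb{Z}/(n-1)\mathbb{Z}$, extended by $m_a(n)=n$. *)

theory Defs
  imports "HOL-Combinatorics.Combinatorics"
begin

text \<open>Permutations of {1..n} are functions nat => nat that permute {1..n}
  (identity outside). Product = function composition (rightmost first).\<close>

definition sigma_n :: "nat \<Rightarrow> nat \<Rightarrow> nat" where
  "sigma_n n i = (if 1 \<le> i \<and> i + 2 \<le> n then i + 1 else if i = n - 1 \<and> 1 \<le> i then 1 else i)"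

definition rho_n :: "nat \<Rightarrow> nat \<Rightarrow> nat" where
  "rho_n n i = (if i = n - 1 then n else if i = n then n - 1
               else if 1 \<le> i \<and> i + 2 \<le> n then n - 1 - i else i)"

text \<open>Multiplication by a on Z/(n-1) with residues represented by 1..n-1
  (n-1 representing 0), fixing n (and everything outside {1..n}).\<close>
definition mult_perm :: "nat \<Rightarrow> nat \<Rightarrow> nat \<Rightarrow> nat" where
  "mult_perm n a i = (if 1 \<le> i \<and> i \<le> n - 1
      then (if (a * i) mod (n - 1) = 0 then n - 1 else (a * i) mod (n - 1)) else i)"

end

theory Submission
  imports Defs "HOL-Number_Theory.Cong"
begin

lemma sig_pow:
  assumes "n \<ge> 2"
  shows "(sigma_n n ^^ k) i = (if 1 \<le> i \<and> i \<le> n-1 then (i + k - 1) mod (n-1) + 1 else i)"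
proof (induction k)
  case 0
  then show ?case using assms by auto
next
  case (Suc k)
  show ?case
  proof (cases "1 \<le> i \<and> i \<le> n-1")
    case True
    define x where "x = (i + k - 1) mod (n-1)"
    have xl: "x < n - 1" using assms unfolding x_def by simp
    have e: "i + Suc k - 1 = Suc (i + k - 1)" using True by simp
    have IH: "(sigma_n n ^^ k) i = x + 1" using Suc True x_def by simp
    have "(sigma_n n ^^ Suc k) i = sigma_n n (x + 1)" using IH by simp
    also have "\<dots> = (if x + 1 = n - 1 then 1 else x + 2)"
      using xl assms by (auto simp: sigma_n_def)
    also have "\<dots> = (i + Suc k - 1) mod (n-1) + 1"
      unfolding e mod_Suc x_def[symmetric] by simp
    finally show ?thesis using True by simp
  next
    case False
    have h: "(sigma_n n ^^ k) i = i" by (rule trans[OF Suc.IH if_not_P[OF False]])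
    have "sigma_n n i = i" using False unfolding sigma_n_def by auto
    then show ?thesis unfolding if_not_P[OF False] using h by simp
  qed
qed

lemma sig_in:
  assumes "n \<ge> 2" "1 \<le> i" "i \<le> n - 1"
  shows "1 \<le> (sigma_n n ^^ k) i \<and> (sigma_n n ^^ k) i \<le> n - 1 \<and>
         (sigma_n n ^^ k) i mod (n-1) = (i + k) mod (n - 1)"
proof -
  have l: "(i + k - 1) mod (n-1) < n - 1" using assms by simp
  have e: "i + k = Suc (i + k - 1)" using assms by simp
  have m: "((i + k - 1) mod (n-1) + 1) mod (n-1) = (i+k) mod (n-1)"
    by (subst e) (simp add: mod_Suc_eq)
  have v: "(sigma_n n ^^ k) i = (i + k - 1) mod (n-1) + 1" using sig_pow[OF assms(1)] assms by simp
  show ?thesis unfolding v using l m by simp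
qed

lemma sig_out:
  assumes "n \<ge> 2" "\<not> (1 \<le> i \<and> i \<le> n - 1)"
  shows "(sigma_n n ^^ k) i = i"
  using sig_pow[OF assms(1)] assms(2) by auto

lemma uniq:
  fixes x y N :: nat
  assumes "1 \<le> x" "x \<le> N" "1 \<le> y" "y \<le> N" "x mod N = y mod N"
  shows "x = y"
proof -
  have "x mod N = (if x = N then 0 else x)" using assms by auto
  moreover have "y mod N = (if y = N then 0 else y)" using assms by auto
  ultimately show ?thesis using assms by (auto split: if_splits)
qed

lemma uniq':
  fixes x y N :: nat
  assumes "x mod N = y mod N" "1 \<le> x" "x \<le> N" "1 \<le> y" "y \<le> N"
  shows "x = y"
  using uniq assms by blast

lemma m_in:
  assumes "n \<ge> 2" "1 \<le> i" "i \<le> n - 1"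
  shows "1 \<le> mult_perm n a i \<and> mult_perm n a i \<le> n - 1 \<and>
         mult_perm n a i mod (n-1) = (a * i) mod (n - 1)"
  using assms by (auto simp: mult_perm_def)

lemma m_out:
  assumes "\<not> (1 \<le> i \<and> i \<le> n - 1)"
  shows "mult_perm n a i = i"
  using assms by (auto simp: mult_perm_def)

lemma sig_cong:
  assumes "n \<ge> 2" "p mod (n-1) = q mod (n-1)"
  shows "sigma_n n ^^ p = sigma_n n ^^ q"
proof
  fix i
  show "(sigma_n n ^^ p) i = (sigma_n n ^^ q) i"
  proof (cases "1 \<le> i \<and> i \<le> n - 1")
    case True
    have "(i + p) mod (n-1) = (i + q) mod (n-1)" using assms(2) by (metis mod_add_right_eq)
    then have "(sigma_n n ^^ p) i mod (n-1) = (sigma_n n ^^ q) i mod (n-1)"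
      using sig_in[OF assms(1), of i] True by simp
    then show ?thesis
      by (rule uniq'[of _ "n-1"]) (use sig_in[OF assms(1), of i] True in auto)
  next
    case False
    then show ?thesis using sig_out[OF assms(1)] by simp
  qed
qed

lemma m_sig:
  assumes "n \<ge> 2"
  shows "mult_perm n a ((sigma_n n ^^ j) i) = (sigma_n n ^^ (a*j)) (mult_perm n a i)"
proof (cases "1 \<le> i \<and> i \<le> n - 1")
  case True
  have s: "1 \<le> (sigma_n n ^^ j) i \<and> (sigma_n n ^^ j) i \<le> n - 1 \<and>
         (sigma_n n ^^ j) i mod (n-1) = (i + j) mod (n - 1)" using sig_in assms True by blast
  have m: "1 \<le> mult_perm n a i \<and> mult_perm n a i \<le> n - 1 \<and>
         mult_perm n a i mod (n-1) = (a * i) mod (n - 1)" using m_in assms True by blast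
  have ms: "1 \<le> mult_perm n a ((sigma_n n ^^ j) i) \<and> mult_perm n a ((sigma_n n ^^ j) i) \<le> n - 1 \<and>
         mult_perm n a ((sigma_n n ^^ j) i) mod (n-1) = (a * ((sigma_n n ^^ j) i)) mod (n - 1)"
    using m_in assms s by blast
  have sm: "1 \<le> (sigma_n n ^^ (a*j)) (mult_perm n a i) \<and> (sigma_n n ^^ (a*j)) (mult_perm n a i) \<le> n - 1 \<and>
         (sigma_n n ^^ (a*j)) (mult_perm n a i) mod (n-1) = (mult_perm n a i + a*j) mod (n - 1)"
    using sig_in assms m by blast
  have "(a * ((sigma_n n ^^ j) i)) mod (n - 1) = (a * (i + j)) mod (n-1)"
    using s by (metis mod_mult_right_eq)
  also have "\<dots> = (a * i + a * j) mod (n-1)" by (simp add: algebra_simps)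
  also have "\<dots> = (mult_perm n a i + a*j) mod (n - 1)" using m by (metis mod_add_left_eq)
  finally have "mult_perm n a ((sigma_n n ^^ j) i) mod (n-1) = (sigma_n n ^^ (a*j)) (mult_perm n a i) mod (n-1)"
    using ms sm by simp
  then show ?thesis by (rule uniq'[of _ "n-1"]) (use ms sm in auto)
next
  case False
  then show ?thesis using sig_out[OF assms] m_out by simp
qed

lemma L1: fixes N a i :: nat
  assumes "i < N" "1 \<le> i" "coprime a N" shows "a * i mod N \<noteq> 0"
proof
  assume "a * i mod N = 0"
  then have "N dvd a * i" by auto
  then have "N dvd i" using assms(3) by (simp add: coprime_commute coprime_dvd_mult_right_iff)
  then show False using assms(1,2) by (auto dest: dvd_imp_le)
qed
lemma L2: fixes N a x y :: nat
  assumes "coprime a N" "a * x mod N = a * y mod N" shows "x mod N = y mod N"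
  using assms cong_mult_lcancel_nat[of a N x y] unfolding cong_def by simp
lemma L3: fixes N u a i :: nat
  assumes "u \<le> N" "i \<le> N" "u mod N = (a*i) mod N" shows "(N - u) mod N = (a * (N - i)) mod N"
proof -
  have "int u mod int N = int (a*i) mod int N" using assms(3) by (metis of_nat_mod)
  then have d: "int N dvd int u - int a * int i" by (simp add: mod_eq_dvd_iff)
  have "int N dvd (int N - int u) - int a * (int N - int i)"
  proof -
    have "(int N - int u) - int a * (int N - int i) = int N * (1 - int a) - (int u - int a * int i)"
      by (simp add: algebra_simps)
    then show ?thesis using d by (metis dvd_diff dvd_triv_left)
  qed
  then have "(int N - int u) mod int N = (int a * (int N - int i)) mod int N"
    using mod_eq_dvd_iff by blast
  then have "int (N - u) mod int N = int (a * (N - i)) mod int N"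
    using assms(1,2) by (simp add: of_nat_diff)
  then show ?thesis by (metis of_nat_eq_iff of_nat_mod)
qed

lemma m_N: "n \<ge> 2 \<Longrightarrow> mult_perm n a (n-1) = n - 1"
  by (auto simp: mult_perm_def)

lemma m_n: "mult_perm n a n = n"
  by (auto simp: mult_perm_def)

lemma m_small:
  assumes "n \<ge> 2" "coprime a (n-1)" "1 \<le> i" "i \<le> n - 2"
  shows "1 \<le> mult_perm n a i \<and> mult_perm n a i \<le> n - 2"
proof -
  have h0: "a * i mod (n-1) \<noteq> 0" using L1[of i "n-1" a] assms by auto
  have h1: "a * i mod (n-1) < n - 1" using assms by simp
  have h2: "a * i mod (n-1) \<le> n - 2" using h1 by linarith
  have h3: "1 \<le> i \<and> i \<le> n - 1" using assms by linarith
  have h4: "mult_perm n a i = a * i mod (n-1)" using h3 h0 unfolding mult_perm_def by simp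
  show ?thesis using h0 h2 h4 by linarith
qed

lemma m_rho:
  assumes "n \<ge> 2" "coprime a (n-1)"
  shows "mult_perm n a (rho_n n i) = rho_n n (mult_perm n a i)"
proof -
  consider "i = n" | "i = n - 1" | "1 \<le> i \<and> i \<le> n - 2" | "\<not> (1 \<le> i \<and> i \<le> n)"
    using assms by linarith
  then show ?thesis
  proof cases
    case 1 then show ?thesis using assms m_N m_n by (simp add: rho_n_def)
  next
    case 2 then show ?thesis using assms m_N m_n by (simp add: rho_n_def)
  next
    case 3
    let ?u = "mult_perm n a i"
    have u: "1 \<le> ?u \<and> ?u \<le> n - 2" using m_small assms 3 by blast
    have r1: "rho_n n i = n - 1 - i" using 3 assms by (auto simp: rho_n_def)
    have r2: "rho_n n ?u = n - 1 - ?u" using u assms by (auto simp: rho_n_def)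
    have mi: "?u mod (n-1) = a * i mod (n-1)" using m_in[of n i a] 3 assms by auto
    have a1: "1 \<le> mult_perm n a (n - 1 - i) \<and> mult_perm n a (n - 1 - i) \<le> n - 1 \<and>
       mult_perm n a (n - 1 - i) mod (n-1) = a * (n - 1 - i) mod (n-1)"
      using m_in[of n "n - 1 - i" a] 3 assms by auto
    have "(n - 1 - ?u) mod (n-1) = a * (n - 1 - i) mod (n-1)"
      using u 3 mi assms by (intro L3) auto
    then have "mult_perm n a (n - 1 - i) mod (n-1) = (n - 1 - ?u) mod (n-1)" using a1 by simp
    then have "mult_perm n a (n - 1 - i) = n - 1 - ?u"
      by (rule uniq'[of _ "n-1"]) (use a1 u in auto)
    then show ?thesis using r1 r2 by simp
  next
    case 4
    have "rho_n n i = i" using 4 assms by (auto simp: rho_n_def)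
    moreover have "mult_perm n a i = i" using 4 by (intro m_out) auto
    ultimately show ?thesis by simp
  qed
qed

lemma m_permutes:
  assumes "n \<ge> 2" "coprime a (n-1)"
  shows "mult_perm n a permutes {1..n}"
proof -
  have inj: "inj_on (mult_perm n a) {1..n-1}"
  proof
    fix x y assume x: "x \<in> {1..n-1}" and y: "y \<in> {1..n-1}" and e: "mult_perm n a x = mult_perm n a y"
    have "a * x mod (n-1) = a * y mod (n-1)" using m_in[of n x a] m_in[of n y a] x y e assms by auto
    then have "x mod (n-1) = y mod (n-1)" using L2 assms by blast
    then show "x = y" by (rule uniq'[of _ "n-1"]) (use x y in auto)
  qed
  have sub: "mult_perm n a ` {1..n-1} \<subseteq> {1..n-1}" using m_in[of n _ a] assms by auto
  have "mult_perm n a ` {1..n-1} = {1..n-1}" using endo_inj_surj[OF _ sub inj] by simp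
  then have "bij_betw (mult_perm n a) {1..n-1} {1..n-1}" using inj by (simp add: bij_betw_def)
  then have "mult_perm n a permutes {1..n-1}"
    by (rule bij_imp_permutes) (auto simp: m_out)
  then show ?thesis by (rule permutes_subset) auto
qed

theorem proposition10:
  fixes n :: nat and tau :: "nat \<Rightarrow> nat"
  assumes "n \<ge> 2"
    and "tau permutes {1..n}"
    and "tau \<circ> tau = id" and "tau \<noteq> id"
    and "tau n = n - 1"
    and "\<forall>k\<in>{1..n-2}. tau \<circ> (sigma_n n ^^ k) \<circ> tau
           = (sigma_n n ^^ tau k) \<circ> tau \<circ> (sigma_n n ^^ tau (rho_n n (tau k)))"
  shows "\<forall>a\<in>{1..n-1}. coprime a (n - 1) \<longrightarrow>
    (let tau' = mult_perm n a \<circ> tau \<circ> inv (mult_perm n a) in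
      tau' permutes {1..n} \<and> tau' \<circ> tau' = id \<and> tau' \<noteq> id \<and> tau' n = n - 1 \<and>
      (\<forall>k\<in>{1..n-2}. tau' \<circ> (sigma_n n ^^ k) \<circ> tau'
           = (sigma_n n ^^ tau' k) \<circ> tau' \<circ> (sigma_n n ^^ tau' (rho_n n (tau' k)))))"
proof (intro ballI impI)
  fix a assume aI: "a \<in> {1..n-1}" and cop: "coprime a (n - 1)"
  define S where "S = sigma_n n"
  define M where "M = mult_perm n a"
  define Mi where "Mi = inv M"
  note n2 = assms(1)
  have Mp: "M permutes {1..n}" using m_permutes n2 cop unfolding M_def by blast
  have Tp: "tau permutes {1..n}" using assms(2) .
  have MMi: "\<And>x. M (Mi x) = x" using Mp unfolding Mi_def by (simp add: permutes_inverses(1))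
  have MiM: "\<And>x. Mi (M x) = x" using Mp unfolding Mi_def by (simp add: permutes_inverses(2))
  have TT: "\<And>x. tau (tau x) = x" using fun_cong[OF assms(3)] by simp
  have Mn: "M n = n" unfolding M_def by (rule m_n)
  have MN: "M (n-1) = n - 1" unfolding M_def using m_N n2 by blast
  have Mn1: "tau (n-1) = n" using TT[of n] assms(5) by simp
  have MS: "\<And>j x. M ((S ^^ j) x) = (S ^^ (a*j)) (M x)"
    unfolding M_def S_def using m_sig n2 by blast
  have SMi: "(S ^^ j) (Mi x) = Mi ((S ^^ (a*j)) x)" for j x
  proof -
    have "M ((S ^^ j) (Mi x)) = (S ^^ (a*j)) x" using MS[of j "Mi x"] MMi[of x] by simp
    then have "Mi (M ((S ^^ j) (Mi x))) = Mi ((S ^^ (a*j)) x)" by simp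
    then show ?thesis using MiM by simp
  qed
  have MiSM: "Mi ((S ^^ (a*j)) (M x)) = (S ^^ j) x" for j x
    using MS[of j x, symmetric] MiM by simp
  have SM: "S ^^ (M x) = S ^^ (a * x)" if "1 \<le> x" "x \<le> n - 1" for x
  proof -
    have "M x mod (n-1) = (a * x) mod (n-1)" unfolding M_def using m_in[OF n2 that] by blast
    then show ?thesis unfolding S_def by (rule sig_cong[OF n2])
  qed
  have Mrho: "\<And>x. M (rho_n n x) = rho_n n (M x)" unfolding M_def using m_rho n2 cop by blast
  have Mirho: "Mi (rho_n n x) = rho_n n (Mi x)" for x
  proof -
    have "M (rho_n n (Mi x)) = rho_n n x" using Mrho[of "Mi x"] MMi[of x] by simp
    then have "Mi (M (rho_n n (Mi x))) = Mi (rho_n n x)" by simp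
    then show ?thesis using MiM by simp
  qed
  have Tin: "\<And>x. x \<in> {1..n} \<Longrightarrow> tau x \<in> {1..n}" using permutes_in_image[OF Tp] by blast
  have rin: "\<And>x. x \<in> {1..n} \<Longrightarrow> rho_n n x \<in> {1..n}" using n2 by (auto simp: rho_n_def)
  have rN: "\<And>x. x \<in> {1..n} \<Longrightarrow> rho_n n x = n - 1 \<Longrightarrow> x = n" using n2 by (auto simp: rho_n_def split: if_splits)
  define t' where "t' = M \<circ> tau \<circ> Mi"
  have t'p: "t' permutes {1..n}" unfolding t'_def Mi_def
    using Mp Tp by (intro permutes_compose permutes_inv) auto
  have t't': "t' \<circ> t' = id" unfolding t'_def by (rule ext) (simp add: MiM TT MMi)
  have t'ne: "t' \<noteq> id"
  proof
    assume "t' = id"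
    then have h: "\<And>x. M (tau (Mi x)) = x" unfolding t'_def fun_eq_iff by simp
    have "\<And>y. tau y = y"
    proof -
      fix y
      have "M (tau (Mi (M y))) = M y" using h by blast
      then have "Mi (M (tau y)) = Mi (M y)" using MiM by simp
      then show "tau y = y" using MiM by simp
    qed
    then show False using assms(4) by auto
  qed
  have t'n: "t' n = n - 1" unfolding t'_def
  proof -
    have "Mi n = n" using MiM[of n] Mn by simp
    then show "(M \<circ> tau \<circ> Mi) n = n - 1" using MN assms(5) by simp
  qed
  have main: "t' \<circ> (S ^^ k) \<circ> t' = (S ^^ t' k) \<circ> t' \<circ> (S ^^ t' (rho_n n (t' k)))"
    if kI: "k \<in> {1..n-2}" for k
  proof -
    define j where "j = Mi k"
    have kj: "M j = k" unfolding j_def by (simp add: MMi)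
    have jn: "j \<in> {1..n}" unfolding j_def Mi_def using permutes_in_image[OF permutes_inv[OF Mp], of k] kI n2 by auto
    have jI: "j \<in> {1..n-2}"
    proof -
      have "j \<noteq> n" using kj Mn kI by auto
      moreover have "j \<noteq> n - 1" using kj MN kI by auto
      ultimately show ?thesis using jn by auto
    qed
    define q where "q = tau (rho_n n (tau j))"
    have Tj: "tau j \<in> {1..n}" using Tin jn by blast
    have Tjn: "tau j \<noteq> n"
    proof
      assume "tau j = n"
      then have "j = n - 1" using TT[of j] assms(5) by simp
      then show False using jI n2 by auto
    qed
    have rTj: "rho_n n (tau j) \<in> {1..n}" using rin Tj by blast
    have rTjn: "rho_n n (tau j) \<noteq> n - 1" using rN Tj Tjn by blast
    have qI: "q \<in> {1..n}" unfolding q_def using Tin rTj by blast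
    have qn: "q \<noteq> n"
    proof
      assume "q = n"
      then have "tau (tau (rho_n n (tau j))) = tau n" unfolding q_def by simp
      then show False using TT rTjn assms(5) by simp
    qed
    have hf: "tau \<circ> (S ^^ j) \<circ> tau = (S ^^ tau j) \<circ> tau \<circ> (S ^^ q)"
      using assms(6) jI unfolding S_def q_def by blast
    have hyp: "tau ((S ^^ j) (tau y)) = (S ^^ tau j) (tau ((S ^^ q) y))" for y
      using fun_cong[OF hf, of y] by simp
    have e1: "S ^^ k = S ^^ (a * j)" proof -
      have "S ^^ M j = S ^^ (a * j)" by (rule SM) (use jI in auto)
      then show ?thesis using kj by simp
    qed
    have e2: "t' k = M (tau j)" unfolding t'_def j_def by simp
    have e3: "S ^^ (M (tau j)) = S ^^ (a * tau j)" proof (rule SM)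
      show "1 \<le> tau j" using Tj by simp
      have "tau j \<le> n" using Tj by simp
      then show "tau j \<le> n - 1" using Tjn by linarith
    qed
    have e4: "t' (rho_n n (t' k)) = M q" unfolding e2 q_def t'_def
      by (simp add: Mirho[symmetric] MiM Mrho[symmetric] j_def)
    have e5: "S ^^ (M q) = S ^^ (a * q)" proof (rule SM)
      show "1 \<le> q" using qI by simp
      have "q \<le> n" using qI by simp
      then show "q \<le> n - 1" using qn by linarith
    qed
    show ?thesis
    proof
      fix x
      have "(t' \<circ> (S ^^ k) \<circ> t') x = M (tau (Mi ((S ^^ (a*j)) (M (tau (Mi x))))))"
        unfolding t'_def e1 by simp
      also have "\<dots> = M (tau ((S ^^ j) (tau (Mi x))))" by (simp add: MiSM)
      also have "\<dots> = M ((S ^^ tau j) (tau ((S ^^ q) (Mi x))))" by (simp add: hyp)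
      also have "\<dots> = (S ^^ (a * tau j)) (M (tau (Mi ((S ^^ (a*q)) x))))" by (simp add: MS SMi)
      also have "\<dots> = ((S ^^ t' k) \<circ> t' \<circ> (S ^^ t' (rho_n n (t' k)))) x"
        unfolding e4 unfolding e5 e2 unfolding e3 unfolding t'_def by simp
      finally show "(t' \<circ> (S ^^ k) \<circ> t') x = ((S ^^ t' k) \<circ> t' \<circ> (S ^^ t' (rho_n n (t' k)))) x" .
    qed
  qed
  have tdef: "mult_perm n a \<circ> tau \<circ> inv (mult_perm n a) = t'" unfolding t'_def M_def Mi_def ..
  have Sd: "sigma_n n = S" by (simp add: S_def)
  show "let tau' = mult_perm n a \<circ> tau \<circ> inv (mult_perm n a) in
      tau' permutes {1..n} \<and> tau' \<circ> tau' = id \<and> tau' \<noteq> id \<and> tau' n = n - 1 \<and>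
      (\<forall>k\<in>{1..n-2}. tau' \<circ> (sigma_n n ^^ k) \<circ> tau'
           = (sigma_n n ^^ tau' k) \<circ> tau' \<circ> (sigma_n n ^^ tau' (rho_n n (tau' k))))"
    unfolding Let_def tdef Sd using t'p t't' t'ne t'n main by simp
qed

end
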